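(* If $\lambda$ is a panmagic permutation of $\Omega_m$ and $\rho$ is a panmagic permutation of $\Omega_n$, then the permutation $\lambda\,\dot\times\,\rho$ of $\Omega_{mn}$ defined by $(\lambda\,\dot\times\,\rho)(jn+s)=\lambda(j)\,n+\rho(s)$ for $j\in\Omega_m$, $s\in\Omega_n$, is panmagic.
   Context: $\Omega_n=\{0,1,\dots,n-1\}$. A permutation $\pi$ of $\Omega_n$ is panmagic if its permutation matrix $P_\pi$ (with $(i,j)$ entry $1$ if $i=\pi(j)$ and $0$ otherwise) is panmagic, i.e. the sums of its entries along all rows, all columns, all upward diagonals $\{(i,j): i+j\equiv k \pmod n\}$ and all downward diagonals $\{(i,j): i-j\equiv k\pmod n\}$, $k\in\Omega_n$, are equal; equivalently, the maps $j\mapsto\pi(j)-j$ and $j\mapsto\pi(j)+j$ modulo $n$ are bijections of $\Omega_n$. *)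

theory Defs
  imports Main
begin

text \<open>Omega_n = {0,...,n-1}; a permutation of Omega_n is a map nat => nat that is
  a bijection of {..<n} onto itself (values outside are irrelevant).\<close>

definition perm_of :: "nat \<Rightarrow> (nat \<Rightarrow> nat) \<Rightarrow> bool" where
  "perm_of n p \<longleftrightarrow> bij_betw p {..<n} {..<n}"

definition perm_matrix :: "(nat \<Rightarrow> nat) \<Rightarrow> nat \<Rightarrow> nat \<Rightarrow> nat" where
  "perm_matrix p i j = (if i = p j then 1 else 0)"

definition panmagic_matrix :: "nat \<Rightarrow> (nat \<Rightarrow> nat \<Rightarrow> nat) \<Rightarrow> bool" where
  "panmagic_matrix n M \<longleftrightarrow> (\<exists>c. \<forall>k<n.
      (\<Sum>j<n. M k j) = c \<and>
      (\<Sum>i<n. M i k) = c \<and>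
      (\<Sum>(i,j)\<in>{(i,j). i < n \<and> j < n \<and> (i + j) mod n = k}. M i j) = c \<and>
      (\<Sum>(i,j)\<in>{(i,j). i < n \<and> j < n \<and> (int i - int j) mod int n = int k}. M i j) = c)"

definition panmagic_perm :: "nat \<Rightarrow> (nat \<Rightarrow> nat) \<Rightarrow> bool" where
  "panmagic_perm n p \<longleftrightarrow> perm_of n p \<and> panmagic_matrix n (perm_matrix p)"

definition dot_times :: "nat \<Rightarrow> (nat \<Rightarrow> nat) \<Rightarrow> (nat \<Rightarrow> nat) \<Rightarrow> nat \<Rightarrow> nat" where
  "dot_times n l r x = l (x div n) * n + r (x mod n)"

end

theory Submission
  imports Defs
begin

definition G :: "nat \<Rightarrow> (nat \<Rightarrow> nat) \<Rightarrow> int \<Rightarrow> bool" where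
  "G n p \<sigma> \<longleftrightarrow> (\<forall>a<n. \<forall>b<n. int n dvd ((int (p a) + \<sigma> * int a) - (int (p b) + \<sigma> * int b)) \<longrightarrow> a = b)"

lemma sum_pm_diag:
  assumes "\<forall>j<n. p j < n"
  shows "(\<Sum>(i,j)\<in>{(i,j). i<n \<and> j<n \<and> Q i j}. perm_matrix p i j) = card {j. j<n \<and> Q (p j) j}"
proof -
  have fin: "finite {(i,j). i<n \<and> j<n \<and> Q i j}"
    by (rule finite_subset[of _ "{..<n} \<times> {..<n}"]) auto
  have "(\<Sum>(i,j)\<in>{(i,j). i<n \<and> j<n \<and> Q i j}. perm_matrix p i j)
      = (\<Sum>x\<in>{(i,j). i<n \<and> j<n \<and> Q i j}. if fst x = p (snd x) then 1 else 0)"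
    by (rule sum.cong) (auto simp: perm_matrix_def)
  also have "\<dots> = (\<Sum>x\<in>{x\<in>{(i,j). i<n \<and> j<n \<and> Q i j}. fst x = p (snd x)}. 1)"
    using sum.inter_filter[OF fin, of "\<lambda>_. (1::nat)" "\<lambda>x. fst x = p (snd x)"] by simp
  also have "{x\<in>{(i,j). i<n \<and> j<n \<and> Q i j}. fst x = p (snd x)} = (\<lambda>j. (p j, j)) ` {j. j<n \<and> Q (p j) j}"
    using assms by auto
  also have "(\<Sum>x\<in>\<dots>. 1) = card {j. j<n \<and> Q (p j) j}"
    by (subst card_image[symmetric]) (auto simp: inj_on_def)
  finally show ?thesis .
qed

lemma fiber:
  assumes "\<forall>j<n. f j < (n::nat)"
  shows "(\<forall>k<n. card {j. j<n \<and> f j = k} = 1) \<longleftrightarrow> inj_on f {..<n}"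
proof
  assume h: "\<forall>k<n. card {j. j<n \<and> f j = k} = 1"
  show "inj_on f {..<n}"
  proof (rule inj_onI)
    fix a b assume ab: "a \<in> {..<n}" "b \<in> {..<n}" "f a = f b"
    then have "card {j. j<n \<and> f j = f a} = 1" using h assms by auto
    then obtain z where z: "{j. j<n \<and> f j = f a} = {z}" by (auto simp: card_Suc_eq)
    have "a \<in> {j. j<n \<and> f j = f a}" "b \<in> {j. j<n \<and> f j = f a}" using ab by auto
    then show "a = b" unfolding z by simp
  qed
next
  assume inj: "inj_on f {..<n}"
  have "f ` {..<n} \<subseteq> {..<n}" using assms by auto
  then have surj: "f ` {..<n} = {..<n}"
    using inj by (simp add: card_image card_subset_eq)
  show "\<forall>k<n. card {j. j<n \<and> f j = k} = 1"
  proof (intro allI impI)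
    fix k assume "k < n"
    then obtain a where a: "a < n" "f a = k" using surj by (metis imageE lessThan_iff)
    have "{j. j<n \<and> f j = k} = {a}" using a inj by (auto simp: inj_on_def)
    then show "card {j. j<n \<and> f j = k} = 1" by simp
  qed
qed

lemma G1: "inj_on (\<lambda>j. (p j + j) mod n) {..<n} \<longleftrightarrow> G n p 1"
proof -
  have "((p a + a) mod n = (p b + b) mod n) \<longleftrightarrow>
        int n dvd ((int (p a) + 1 * int a) - (int (p b) + 1 * int b))" for a b
  proof -
    have "((p a + a) mod n = (p b + b) mod n) \<longleftrightarrow> (int (p a + a) mod int n = int (p b + b) mod int n)"
      by (metis of_nat_eq_iff of_nat_mod)
    also have "\<dots> \<longleftrightarrow> int n dvd (int (p a + a) - int (p b + b))"
      by (rule mod_eq_dvd_iff)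
    finally show ?thesis by simp
  qed
  then show ?thesis unfolding G_def inj_on_def by auto
qed

lemma G2: "inj_on (\<lambda>j. nat ((int (p j) - int j) mod int n)) {..<n} \<longleftrightarrow> G n p (-1)"
proof -
  have "(nat ((int (p a) - int a) mod int n) = nat ((int (p b) - int b) mod int n)) \<longleftrightarrow>
        int n dvd ((int (p a) + (-1) * int a) - (int (p b) + (-1) * int b))" if "a < n" for a b
  proof -
    have "n > 0" using that by simp
    then have "(nat ((int (p a) - int a) mod int n) = nat ((int (p b) - int b) mod int n)) \<longleftrightarrow>
       ((int (p a) - int a) mod int n = (int (p b) - int b) mod int n)"
      by (simp add: eq_nat_nat_iff)
    also have "\<dots> \<longleftrightarrow> int n dvd ((int (p a) - int a) - (int (p b) - int b))"
      by (rule mod_eq_dvd_iff)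
    finally show ?thesis by simp
  qed
  then show ?thesis unfolding G_def inj_on_def by auto
qed

lemma char: "panmagic_perm n p \<longleftrightarrow> perm_of n p \<and> G n p 1 \<and> G n p (-1)"
proof (cases "n = 0")
  case True
  then show ?thesis by (simp add: panmagic_perm_def G_def panmagic_matrix_def perm_of_def)
next
  case False
  note n0 = False
  show ?thesis
  proof (cases "perm_of n p")
    case False
    then show ?thesis by (simp add: panmagic_perm_def)
  next
    case True
    then have bij: "bij_betw p {..<n} {..<n}" by (simp add: perm_of_def)
    then have pn: "\<forall>j<n. p j < n" by (auto dest: bij_betw_apply)
    have row: "(\<Sum>j<n. perm_matrix p k j) = 1" if "k < n" for k
    proof -
      have "(\<Sum>j<n. perm_matrix p k j) = (\<Sum>j\<in>{j\<in>{..<n}. k = p j}. 1)"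
        using sum.inter_filter[of "{..<n}" "\<lambda>_. 1::nat" "\<lambda>j. k = p j"] by (simp add: perm_matrix_def)
      moreover have "k \<in> p ` {..<n}" using bij_betw_imp_surj_on[OF bij] that by simp
      then obtain a where a: "a < n" "p a = k" by auto
      have "{j\<in>{..<n}. k = p j} = {a}" using bij a by (auto simp: bij_betw_def inj_on_def)
      ultimately show ?thesis by simp
    qed
    have col: "(\<Sum>i<n. perm_matrix p i k) = 1" if "k < n" for k
    proof -
      have "(\<Sum>i<n. perm_matrix p i k) = (\<Sum>i\<in>{i\<in>{..<n}. i = p k}. 1)"
        using sum.inter_filter[of "{..<n}" "\<lambda>_. 1::nat" "\<lambda>i. i = p k"] by (simp add: perm_matrix_def)
      also have "{i\<in>{..<n}. i = p k} = {p k}" using pn that by auto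
      finally show ?thesis by simp
    qed
    have d1: "(\<Sum>(i,j)\<in>{(i,j). i < n \<and> j < n \<and> (i + j) mod n = k}. perm_matrix p i j)
        = card {j. j<n \<and> (\<lambda>j. (p j + j) mod n) j = k}" for k
      using sum_pm_diag[OF pn, of "\<lambda>i j. (i + j) mod n = k"] by simp
    have d2: "(\<Sum>(i,j)\<in>{(i,j). i < n \<and> j < n \<and> (int i - int j) mod int n = int k}. perm_matrix p i j)
        = card {j. j<n \<and> (\<lambda>j. nat ((int (p j) - int j) mod int n)) j = k}" for k
    proof -
      have "{j. j<n \<and> (int (p j) - int j) mod int n = int k} = {j. j<n \<and> (\<lambda>j. nat ((int (p j) - int j) mod int n)) j = k}"
        using False by auto
      then show ?thesis
        using sum_pm_diag[OF pn, of "\<lambda>i j. (int i - int j) mod int n = int k"] by simp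
    qed
    have f1: "\<forall>j<n. (\<lambda>j. (p j + j) mod n) j < n" using False by simp
    have f2: "\<forall>j<n. (\<lambda>j. nat ((int (p j) - int j) mod int n)) j < n" using False
      by (simp add: nat_less_iff)
    have "panmagic_matrix n (perm_matrix p) \<longleftrightarrow>
      (\<forall>k<n. card {j. j<n \<and> (\<lambda>j. (p j + j) mod n) j = k} = 1) \<and>
      (\<forall>k<n. card {j. j<n \<and> (\<lambda>j. nat ((int (p j) - int j) mod int n)) j = k} = 1)"
    proof
      assume "panmagic_matrix n (perm_matrix p)"
      then obtain c where c: "\<forall>k<n.
      (\<Sum>j<n. perm_matrix p k j) = c \<and>
      (\<Sum>i<n. perm_matrix p i k) = c \<and>
      (\<Sum>(i,j)\<in>{(i,j). i < n \<and> j < n \<and> (i + j) mod n = k}. perm_matrix p i j) = c \<and>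
      (\<Sum>(i,j)\<in>{(i,j). i < n \<and> j < n \<and> (int i - int j) mod int n = int k}. perm_matrix p i j) = c"
        unfolding panmagic_matrix_def by blast
      have "c = 1" using c col[of 0] False by auto
      then show "(\<forall>k<n. card {j. j<n \<and> (\<lambda>j. (p j + j) mod n) j = k} = 1) \<and>
      (\<forall>k<n. card {j. j<n \<and> (\<lambda>j. nat ((int (p j) - int j) mod int n)) j = k} = 1)"
      proof (intro conjI allI impI)
        fix k assume k: "k < n"
        show "card {j. j<n \<and> (\<lambda>j. (p j + j) mod n) j = k} = 1"
          using c[rule_format, OF k] d1[of k] \<open>c = 1\<close> by simp
        show "card {j. j<n \<and> (\<lambda>j. nat ((int (p j) - int j) mod int n)) j = k} = 1"
          using c[rule_format, OF k] d2[of k] \<open>c = 1\<close> by simp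
      qed
    next
      assume "(\<forall>k<n. card {j. j<n \<and> (\<lambda>j. (p j + j) mod n) j = k} = 1) \<and>
      (\<forall>k<n. card {j. j<n \<and> (\<lambda>j. nat ((int (p j) - int j) mod int n)) j = k} = 1)"
      then have h1: "\<And>k. k < n \<Longrightarrow> card {j. j<n \<and> (\<lambda>j. (p j + j) mod n) j = k} = 1"
        and h2: "\<And>k. k < n \<Longrightarrow> card {j. j<n \<and> (\<lambda>j. nat ((int (p j) - int j) mod int n)) j = k} = 1"
        by blast+
      show "panmagic_matrix n (perm_matrix p)"
        unfolding panmagic_matrix_def
      proof (intro exI[of _ 1] allI impI conjI)
        fix k assume k: "k < n"
        show "(\<Sum>j<n. perm_matrix p k j) = 1" using row k by simp
        show "(\<Sum>i<n. perm_matrix p i k) = 1" using col k by simp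
        show "(\<Sum>(i,j)\<in>{(i,j). i < n \<and> j < n \<and> (i + j) mod n = k}. perm_matrix p i j) = 1"
          using d1[of k] h1[OF k] by simp
        show "(\<Sum>(i,j)\<in>{(i,j). i < n \<and> j < n \<and> (int i - int j) mod int n = int k}. perm_matrix p i j) = 1"
          using d2[of k] h2[OF k] by simp
      qed
    qed
    then show ?thesis
      using True fiber[OF f1] fiber[OF f2] G1 G2 by (simp add: panmagic_perm_def)
  qed
qed


lemma decomp:
  assumes "n > 0"
  shows "int (dot_times n l r a) + \<sigma> * int a
    = (int (l (a div n)) + \<sigma> * int (a div n)) * int n + (int (r (a mod n)) + \<sigma> * int (a mod n))"
proof -
  have "int a = int (a div n) * int n + int (a mod n)"
    by (metis of_nat_add of_nat_mult div_mult_mod_eq)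
  then show ?thesis by (simp add: dot_times_def algebra_simps)
qed

lemma divlt: "a < m * n \<Longrightarrow> a div n < (m::nat)"
  by (simp add: less_mult_imp_div_less)

lemma G_prod:
  assumes m: "m > 0" and n: "n > 0" and Gl: "G m l \<sigma>" and Gr: "G n r \<sigma>"
  shows "G (m * n) (dot_times n l r) \<sigma>"
  unfolding G_def
proof (intro allI impI)
  fix a b assume a: "a < m * n" and b: "b < m * n"
  define Ua where "Ua = int (l (a div n)) + \<sigma> * int (a div n)"
  define Ub where "Ub = int (l (b div n)) + \<sigma> * int (b div n)"
  define Va where "Va = int (r (a mod n)) + \<sigma> * int (a mod n)"
  define Vb where "Vb = int (r (b mod n)) + \<sigma> * int (b mod n)"
  assume d: "int (m * n) dvd (int (dot_times n l r a) + \<sigma> * int a - (int (dot_times n l r b) + \<sigma> * int b))"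
  have D: "int (dot_times n l r a) + \<sigma> * int a - (int (dot_times n l r b) + \<sigma> * int b)
      = (Ua - Ub) * int n + (Va - Vb)"
    unfolding Ua_def Ub_def Va_def Vb_def decomp[OF n] by (simp add: algebra_simps)
  have "int n dvd (Ua - Ub) * int n + (Va - Vb)"
    using d D by (metis dvd_mult_right of_nat_mult)
  then have "int n dvd (Va - Vb)" by (simp add: dvd_add_right_iff)
  then have s: "a mod n = b mod n"
    using Gr n unfolding G_def Va_def Vb_def by (meson mod_less_divisor)
  then have "Va = Vb" unfolding Va_def Vb_def by simp
  then have "int m * int n dvd (Ua - Ub) * int n" using d D by simp
  then have "int m dvd (Ua - Ub)" using n by simp
  then have j: "a div n = b div n"
    using Gl divlt[OF a] divlt[OF b] unfolding G_def Ua_def Ub_def by blast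
  show "a = b" using s j by (metis div_mult_mod_eq)
qed

lemma perm_prod:
  assumes m: "m > 0" and n: "n > 0" and pl: "perm_of m l" and pr: "perm_of n r"
  shows "perm_of (m * n) (dot_times n l r)"
proof -
  have bl: "bij_betw l {..<m} {..<m}" and br: "bij_betw r {..<n} {..<n}"
    using pl pr by (auto simp: perm_of_def)
  have into: "dot_times n l r ` {..<m*n} \<subseteq> {..<m*n}"
  proof
    fix y assume "y \<in> dot_times n l r ` {..<m*n}"
    then obtain a where a: "a < m * n" and y: "y = dot_times n l r a" by auto
    have "l (a div n) < m" using bij_betw_apply[OF bl] divlt[OF a] by simp
    then have "l (a div n) + 1 \<le> m" by simp
    then have "(l (a div n) + 1) * n \<le> m * n" by (rule mult_right_mono) simp
    moreover have "r (a mod n) < n" using bij_betw_apply[OF br] n by simp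
    ultimately show "y \<in> {..<m*n}" unfolding y dot_times_def by (simp add: algebra_simps)
  qed
  have inj: "inj_on (dot_times n l r) {..<m*n}"
  proof (rule inj_onI)
    fix a b assume a: "a \<in> {..<m*n}" and b: "b \<in> {..<m*n}" and e: "dot_times n l r a = dot_times n l r b"
    have ra: "r (a mod n) < n" "r (b mod n) < n" using bij_betw_apply[OF br] n by simp_all
    have "(l (a div n) * n + r (a mod n)) mod n = (l (b div n) * n + r (b mod n)) mod n"
      using e by (simp add: dot_times_def)
    then have "r (a mod n) = r (b mod n)" using ra by simp
    then have s: "a mod n = b mod n" using br n by (simp add: bij_betw_def inj_on_def)
    have "(l (a div n) * n + r (a mod n)) div n = (l (b div n) * n + r (b mod n)) div n"
      using e by (simp add: dot_times_def)
    then have "l (a div n) = l (b div n)" using ra n by simp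
    then have j: "a div n = b div n" using bl divlt a b by (simp add: bij_betw_def inj_on_def)
    show "a = b" using s j by (metis div_mult_mod_eq)
  qed
  have "dot_times n l r ` {..<m*n} = {..<m*n}"
    using into inj by (simp add: card_image card_subset_eq)
  then show ?thesis using inj by (simp add: perm_of_def bij_betw_def)
qed

theorem corollary3p2:
  fixes m n :: nat and l r :: "nat \<Rightarrow> nat"
  assumes "panmagic_perm m l" and "panmagic_perm n r"
  shows "panmagic_perm (m * n) (dot_times n l r)"
proof (cases "m = 0 \<or> n = 0")
  case True
  then show ?thesis by (auto simp: char perm_of_def G_def bij_betw_def)
next
  case False
  then have m: "m > 0" and n: "n > 0" by auto
  show ?thesis using assms unfolding char
    using perm_prod[OF m n] G_prod[OF m n] by blast
qed

end
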